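(* Let $e,e'$ be distinct edges in a hypergraph $H=(V,E)$ and let $k$ be a positive integer. (1) If $\gamma_H(e)\ge k$ and $e'$ is a $k$-weak edge, then $\gamma_H(e)=\gamma_{H'}(e)$ where $H'=H\setminus e'$. (2) Suppose $\gamma_H(e)<k$ and $e'$ is a $k$-strong edge. Let $H'=H/e'$ be obtained by contracting $e'$. If $f$ is the edge of $H'$ corresponding to $e$, then $\gamma_H(e)=\gamma_{H'}(f)$.
   Context: A hypergraph $H=(V,E)$ has edges that are subsets of $V$. For $U\subseteq V$, $H[U]=(U,\{e\in E:e\subseteq U\})$. For $A\subseteq V$, $\delta_H(A)$ is the set of edges meeting both $A$ and $V\setminus A$; $\lambda(H)=\min_{\emptyset\subsetneq A\subsetneq V}|\delta_H(A)|$. The strength of $e$ is $\gamma_H(e)=\max_{e\subseteq U\subseteq V}\lambda(H[U])$. An edge $e$ is $k$-strong if $\gamma_H(e)\ge k$ and $k$-weak otherwise. $H\setminus e'$ denotes deletion of $e'$. Contracting $e'$ yields $H/e'$: all vertices of $e'$ are identified into one new vertex $v_{e'}$; edges contained in $e'$ are removed; every other edge $g$ meeting $e'$ has $g\cap e'$ replaced by $v_{e'}$. *)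

theory Defs
  imports Main "HOL-Library.Extended_Nat"
begin

text \<open>A hypergraph is given by a vertex set V, a set of edge labels E and an
incidence map I assigning to each edge label its vertex set (edge labels allow
parallel edges, which arise e.g. under contraction).\<close>

definition hypergraph :: "'v set \<Rightarrow> 'e set \<Rightarrow> ('e \<Rightarrow> 'v set) \<Rightarrow> bool" where
  "hypergraph V E I \<longleftrightarrow> finite V \<and> finite E \<and> (\<forall>e\<in>E. I e \<subseteq> V)"

definition cut_edges :: "'v set \<Rightarrow> 'e set \<Rightarrow> ('e \<Rightarrow> 'v set) \<Rightarrow> 'v set \<Rightarrow> 'e set" where
  "cut_edges V E I A = {e \<in> E. I e \<inter> A \<noteq> {} \<and> I e \<inter> (V - A) \<noteq> {}}"

text \<open>lambda(H): minimum cut size; the minimum over the empty family is infinity.\<close>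
definition edge_conn :: "'v set \<Rightarrow> 'e set \<Rightarrow> ('e \<Rightarrow> 'v set) \<Rightarrow> enat" where
  "edge_conn V E I = (INF A \<in> {A. A \<noteq> {} \<and> A \<subset> V}. enat (card (cut_edges V E I A)))"

definition induced_edges :: "'e set \<Rightarrow> ('e \<Rightarrow> 'v set) \<Rightarrow> 'v set \<Rightarrow> 'e set" where
  "induced_edges E I U = {e \<in> E. I e \<subseteq> U}"

definition strength :: "'v set \<Rightarrow> 'e set \<Rightarrow> ('e \<Rightarrow> 'v set) \<Rightarrow> 'e \<Rightarrow> enat" where
  "strength V E I e = (SUP U \<in> {U. I e \<subseteq> U \<and> U \<subseteq> V}. edge_conn U (induced_edges E I U) I)"

text \<open>Contraction of edge e': every vertex of e' is mapped to the new vertex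
(represented by the set I e'), every other vertex v to {v}.\<close>
definition contr_map :: "('e \<Rightarrow> 'v set) \<Rightarrow> 'e \<Rightarrow> 'v \<Rightarrow> 'v set" where
  "contr_map I e' v = (if v \<in> I e' then I e' else {v})"

definition contr_V :: "'v set \<Rightarrow> ('e \<Rightarrow> 'v set) \<Rightarrow> 'e \<Rightarrow> 'v set set" where
  "contr_V V I e' = contr_map I e' ` V"

definition contr_E :: "'e set \<Rightarrow> ('e \<Rightarrow> 'v set) \<Rightarrow> 'e \<Rightarrow> 'e set" where
  "contr_E E I e' = {g \<in> E. \<not> I g \<subseteq> I e'}"

definition contr_I :: "('e \<Rightarrow> 'v set) \<Rightarrow> 'e \<Rightarrow> 'e \<Rightarrow> 'v set set" where
  "contr_I I e' g = contr_map I e' ` I g"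

end

theory Submission
  imports Defs
begin

lemma conn_le: "A \<noteq> {} \<Longrightarrow> A \<subset> U \<Longrightarrow> edge_conn U F I \<le> enat (card (cut_edges U F I A))"
  unfolding edge_conn_def by (rule INF_lower) auto

lemma conn_ge: "(\<And>A. A \<noteq> {} \<Longrightarrow> A \<subset> U \<Longrightarrow> m \<le> enat (card (cut_edges U F I A))) \<Longrightarrow> m \<le> edge_conn U F I"
  unfolding edge_conn_def by (rule INF_greatest) auto

lemma str_ge: "I e \<subseteq> U \<Longrightarrow> U \<subseteq> V \<Longrightarrow> edge_conn U (induced_edges E I U) I \<le> strength V E I e"
  unfolding strength_def by (rule SUP_upper) auto

lemma str_le: "(\<And>U. I e \<subseteq> U \<Longrightarrow> U \<subseteq> V \<Longrightarrow> edge_conn U (induced_edges E I U) I \<le> m) \<Longrightarrow> strength V E I e \<le> m"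
  unfolding strength_def by (rule SUP_least) auto

lemma card_cut_le:
  assumes "finite F2" "cut_edges U1 F1 I1 A1 \<subseteq> cut_edges U2 F2 I2 A2"
  shows "enat (card (cut_edges U1 F1 I1 A1)) \<le> enat (card (cut_edges U2 F2 I2 A2))"
proof -
  have "finite (cut_edges U2 F2 I2 A2)"
    using assms(1) by (rule finite_subset[rotated]) (auto simp: cut_edges_def)
  then show ?thesis using assms(2) by (simp add: card_mono)
qed

lemma enat_less_k: "x < enat k \<Longrightarrow> k > 0 \<Longrightarrow> x \<le> enat (k - 1)"
  by (cases x) auto

lemma strength_exists:
  assumes "enat k \<le> strength V E I e" "k > 0"
  shows "\<exists>W. I e \<subseteq> W \<and> W \<subseteq> V \<and> enat k \<le> edge_conn W (induced_edges E I W) I"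
proof (rule ccontr)
  assume "\<not> ?thesis"
  then have "strength V E I e \<le> enat (k - 1)"
    by (intro str_le) (meson assms(2) enat_less_k not_le)
  with assms(1) have "enat k \<le> enat (k - 1)" by (rule order_trans)
  with assms(2) show False by simp
qed

lemma conn_mono:
  assumes "finite F" "F' \<subseteq> F"
  shows "edge_conn U F' I \<le> edge_conn U F I"
proof (rule conn_ge)
  fix A assume A: "A \<noteq> {}" "A \<subset> U"
  have "edge_conn U F' I \<le> enat (card (cut_edges U F' I A))" by (rule conn_le[OF A])
  also have "\<dots> \<le> enat (card (cut_edges U F I A))"
    using assms by (intro card_cut_le) (auto simp: cut_edges_def)
  finally show "edge_conn U F' I \<le> enat (card (cut_edges U F I A))" .
qed

lemma part1:
  assumes H: "hypergraph V E I" and k: "k > 0"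
    and s1: "strength V E I e \<ge> enat k" and s2: "strength V E I e' < enat k"
  shows "strength V E I e = strength V (E - {e'}) I e"
proof (rule antisym)
  have fin: "finite E" using H by (simp add: hypergraph_def)
  show "strength V (E - {e'}) I e \<le> strength V E I e"
  proof (rule str_le)
    fix U assume U: "I e \<subseteq> U" "U \<subseteq> V"
    have "edge_conn U (induced_edges (E - {e'}) I U) I \<le> edge_conn U (induced_edges E I U) I"
      using fin by (intro conn_mono) (auto simp: induced_edges_def)
    also have "\<dots> \<le> strength V E I e" by (rule str_ge[where I=I and e=e and U=U and V=V, OF U])
    finally show "edge_conn U (induced_edges (E - {e'}) I U) I \<le> strength V E I e" .
  qed
  let ?s = "strength V (E - {e'}) I e"
  have "strength V E I e \<le> max ?s (enat (k - 1))"
  proof (rule str_le)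
    fix U assume U: "I e \<subseteq> U" "U \<subseteq> V"
    show "edge_conn U (induced_edges E I U) I \<le> max ?s (enat (k - 1))"
    proof (cases "I e' \<subseteq> U")
      case True
      have "edge_conn U (induced_edges E I U) I \<le> strength V E I e'"
        by (rule str_ge) (use True U in auto)
      then have "edge_conn U (induced_edges E I U) I < enat k" using s2 by simp
      then show ?thesis using enat_less_k[OF _ k] by (meson max.coboundedI2)
    next
      case False
      then have "induced_edges E I U = induced_edges (E - {e'}) I U"
        by (auto simp: induced_edges_def)
      then have "edge_conn U (induced_edges E I U) I \<le> ?s"
        using str_ge[where I=I and e=e and U=U and V=V and E="E - {e'}", OF U] by simp
      then show ?thesis by (simp add: le_max_iff_disj)
    qed
  qed
  moreover have "\<not> strength V E I e \<le> enat (k - 1)" using s1 k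
    by (metis Suc_diff_1 Suc_ile_eq not_le order_le_less_trans)
  ultimately show "strength V E I e \<le> ?s"
    by (metis le_max_iff_disj)
qed


lemma part2a:
  assumes s1: "strength V E I e < enat k" and s2: "strength V E I e' \<ge> enat k" and "e \<in> E"
  shows "e \<in> contr_E E I e'"
proof (rule ccontr)
  assume "e \<notin> contr_E E I e'"
  then have sub: "I e \<subseteq> I e'" using assms(3) by (auto simp: contr_E_def)
  have "strength V E I e' \<le> strength V E I e"
  proof (rule str_le)
    fix U assume U: "I e' \<subseteq> U" "U \<subseteq> V"
    show "edge_conn U (induced_edges E I U) I \<le> strength V E I e"
      by (rule str_ge) (use U sub in auto)
  qed
  with s1 s2 show False by simp
qed

lemma part2b:
  assumes H: "hypergraph V E I"
  shows "strength V E I e \<le> strength (contr_V V I e') (contr_E E I e') (contr_I I e') e"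
proof (rule str_le)
  have fin: "finite E" and IV: "\<And>g. g \<in> E \<Longrightarrow> I g \<subseteq> V" using H by (auto simp: hypergraph_def)
  let ?c = "contr_map I e'"
  fix U assume U: "I e \<subseteq> U" "U \<subseteq> V"
  define U' where "U' = ?c ` U"
  have U'1: "contr_I I e' e \<subseteq> U'" using U unfolding U'_def contr_I_def by auto
  have U'2: "U' \<subseteq> contr_V V I e'" using U unfolding U'_def contr_V_def by auto
  have "edge_conn U (induced_edges E I U) I
      \<le> edge_conn U' (induced_edges (contr_E E I e') (contr_I I e') U') (contr_I I e')"
  proof (rule conn_ge)
    fix A' assume A': "A' \<noteq> {}" "A' \<subset> U'"
    define A where "A = {u \<in> U. ?c u \<in> A'}"
    have A1: "A \<noteq> {}" using A' unfolding A_def U'_def by auto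
    have A2: "A \<subset> U" using A' unfolding A_def U'_def by auto
    have "cut_edges U (induced_edges E I U) I A
       \<subseteq> cut_edges U' (induced_edges (contr_E E I e') (contr_I I e') U') (contr_I I e') A'"
    proof
      fix g assume g: "g \<in> cut_edges U (induced_edges E I U) I A"
      then have gE: "g \<in> E" and gU: "I g \<subseteq> U"
        by (auto simp: cut_edges_def induced_edges_def)
      from g obtain a where a: "a \<in> I g" "a \<in> A" by (auto simp: cut_edges_def)
      from g obtain b where b: "b \<in> I g" "b \<in> U" "b \<notin> A" by (auto simp: cut_edges_def)
      have nsub: "\<not> I g \<subseteq> I e'"
      proof
        assume "I g \<subseteq> I e'"
        then have "?c a = ?c b" using a b by (auto simp: contr_map_def)
        then show False using a b unfolding A_def by auto
      qed
      have "?c a \<in> A'" using a unfolding A_def by auto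
      moreover have "?c b \<in> U' - A'" using b unfolding A_def U'_def by auto
      ultimately show "g \<in> cut_edges U' (induced_edges (contr_E E I e') (contr_I I e') U') (contr_I I e') A'"
        using gE gU nsub a b unfolding cut_edges_def induced_edges_def contr_E_def contr_I_def U'_def
        by auto
    qed
    then have "enat (card (cut_edges U (induced_edges E I U) I A))
      \<le> enat (card (cut_edges U' (induced_edges (contr_E E I e') (contr_I I e') U') (contr_I I e') A'))"
      by (rule card_cut_le[rotated]) (use fin in \<open>auto simp: induced_edges_def contr_E_def\<close>)
    then show "edge_conn U (induced_edges E I U) I
      \<le> enat (card (cut_edges U' (induced_edges (contr_E E I e') (contr_I I e') U') (contr_I I e') A'))"
      using conn_le[OF A1 A2] by (rule order_trans[rotated])
  qed
  also have "\<dots> \<le> strength (contr_V V I e') (contr_E E I e') (contr_I I e') e"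
    by (rule str_ge) (use U'1 U'2 in auto)
  finally show "edge_conn U (induced_edges E I U) I \<le> strength (contr_V V I e') (contr_E E I e') (contr_I I e') e" .
qed


lemma key:
  assumes H: "hypergraph V E I" and U': "U' \<subseteq> contr_V V I e'"
    and Ud: "U = {v \<in> V. contr_map I e' v \<in> U'}"
    and A: "A \<noteq> {}" "A \<subset> U"
    and ns: "\<not> (I e' \<inter> A \<noteq> {} \<and> I e' \<inter> (U - A) \<noteq> {})"
  shows "edge_conn U' (induced_edges (contr_E E I e') (contr_I I e') U') (contr_I I e')
           \<le> enat (card (cut_edges U (induced_edges E I U) I A))"
proof -
  have fin: "finite E" and IV: "\<And>g. g \<in> E \<Longrightarrow> I g \<subseteq> V" using H by (auto simp: hypergraph_def)
  let ?c = "contr_map I e'"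
  define A' where "A' = ?c ` A"
  have P: "v \<in> A" if v: "v \<in> U" "?c v \<in> A'" for v
  proof -
    from v obtain a where a: "a \<in> A" "?c a = ?c v" unfolding A'_def by auto
    show ?thesis
    proof (cases "v \<in> I e'")
      case True
      then have "a \<in> I e'" using a by (auto simp: contr_map_def split: if_splits)
      then show ?thesis using ns a True v by blast
    next
      case False
      then have "a = v" using a by (auto simp: contr_map_def split: if_splits)
      then show ?thesis using a by simp
    qed
  qed
  have imU: "?c ` U = U'" using U' unfolding Ud contr_V_def by auto
  have A'1: "A' \<noteq> {}" using A unfolding A'_def by auto
  have A'2: "A' \<subset> U'"
  proof -
    have "A' \<subseteq> U'" using A imU unfolding A'_def by auto
    moreover obtain u where "u \<in> U" "u \<notin> A" using A by auto
    then have "?c u \<in> U'" "?c u \<notin> A'" using P imU by auto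
    ultimately show ?thesis by auto
  qed
  have "cut_edges U' (induced_edges (contr_E E I e') (contr_I I e') U') (contr_I I e') A'
      \<subseteq> cut_edges U (induced_edges E I U) I A"
  proof
    fix g assume g: "g \<in> cut_edges U' (induced_edges (contr_E E I e') (contr_I I e') U') (contr_I I e') A'"
    then have gE: "g \<in> E" and gU': "?c ` I g \<subseteq> U'"
      by (auto simp: cut_edges_def induced_edges_def contr_E_def contr_I_def)
    have gU: "I g \<subseteq> U" using gU' IV[OF gE] unfolding Ud by auto
    from g obtain v where v: "v \<in> I g" "?c v \<in> A'"
      by (auto simp: cut_edges_def contr_I_def)
    from g obtain w where w: "w \<in> I g" "?c w \<notin> A'"
      by (auto simp: cut_edges_def contr_I_def)
    have "v \<in> A" using P v gU by auto
    moreover have "w \<notin> A" using w unfolding A'_def by auto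
    ultimately show "g \<in> cut_edges U (induced_edges E I U) I A"
      using gE gU v w unfolding cut_edges_def induced_edges_def by auto
  qed
  then have "enat (card (cut_edges U' (induced_edges (contr_E E I e') (contr_I I e') U') (contr_I I e') A'))
      \<le> enat (card (cut_edges U (induced_edges E I U) I A))"
    by (rule card_cut_le[rotated]) (use fin in \<open>auto simp: induced_edges_def\<close>)
  then show ?thesis using conn_le[OF A'1 A'2] by (rule order_trans[rotated])
qed


lemma part2c:
  assumes H: "hypergraph V E I" and k: "k > 0" and eE: "e \<in> E" and e'E: "e' \<in> E"
    and s1: "strength V E I e < enat k" and s2: "strength V E I e' \<ge> enat k"
  shows "strength (contr_V V I e') (contr_E E I e') (contr_I I e') e \<le> strength V E I e"
proof (rule str_le)
  have fin: "finite E" and IV: "\<And>g. g \<in> E \<Longrightarrow> I g \<subseteq> V" using H by (auto simp: hypergraph_def)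
  let ?c = "contr_map I e'"
  fix U' assume U': "contr_I I e' e \<subseteq> U'" "U' \<subseteq> contr_V V I e'"
  define U where "U = {v \<in> V. ?c v \<in> U'}"
  define m where "m = edge_conn U' (induced_edges (contr_E E I e') (contr_I I e') U') (contr_I I e')"
  have UV: "U \<subseteq> V" unfolding U_def by auto
  have eU: "I e \<subseteq> U" using U'(1) IV[OF eE] unfolding U_def contr_I_def by auto
  show "m \<le> strength V E I e"
  proof (cases "I e' \<inter> U = {}")
    case True
    have "m \<le> edge_conn U (induced_edges E I U) I"
      unfolding m_def
      by (rule conn_ge, rule key[OF H U'(2) U_def]) (use True in auto)
    also have "\<dots> \<le> strength V E I e" by (rule str_ge[where I=I and e=e and U=U and V=V, OF eU UV])
    finally show ?thesis .
  next
    case False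
    then obtain w where w: "w \<in> I e'" "w \<in> U" by auto
    have e'U: "I e' \<subseteq> U"
    proof
      fix v assume v: "v \<in> I e'"
      have "?c v = ?c w" using v w by (simp add: contr_map_def)
      then show "v \<in> U" using v w IV[OF e'E] unfolding U_def by auto
    qed
    obtain W where W: "I e' \<subseteq> W" "W \<subseteq> V" "enat k \<le> edge_conn W (induced_edges E I W) I"
      using strength_exists[OF s2 k] by blast
    define X where "X = U \<union> W"
    have "min m (enat k) \<le> edge_conn X (induced_edges E I X) I"
    proof (rule conn_ge)
      fix A assume A: "A \<noteq> {}" "A \<subset> X"
      have finc: "finite (induced_edges E I X)" using fin by (auto simp: induced_edges_def)
      show "min m (enat k) \<le> enat (card (cut_edges X (induced_edges E I X) I A))"
      proof (cases "A \<inter> W \<noteq> {} \<and> W - A \<noteq> {}")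
        case True
        have "enat k \<le> enat (card (cut_edges W (induced_edges E I W) I (A \<inter> W)))"
        proof -
          have "A \<inter> W \<noteq> {}" "A \<inter> W \<subset> W" using True by auto
          from conn_le[OF this, of "induced_edges E I W" I] W(3) show ?thesis by (rule order_trans[rotated])
        qed
        also have "\<dots> \<le> enat (card (cut_edges X (induced_edges E I X) I A))"
          by (rule card_cut_le[OF finc]) (auto simp: cut_edges_def induced_edges_def X_def)
        finally show ?thesis by (simp add: min.coboundedI2)
      next
        case False
        have ne: "I e' \<noteq> {}" using w by auto
        have AU1: "A \<inter> U \<noteq> {}"
        proof
          assume "A \<inter> U = {}"
          then have "A \<subseteq> W" using A unfolding X_def by auto
          then have "A \<inter> W \<noteq> {}" using A by auto
          then have "W \<subseteq> A" using False by auto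
          then show False using \<open>A \<inter> U = {}\<close> W(1) e'U ne by auto
        qed
        have AU2: "A \<inter> U \<subset> U"
        proof (rule ccontr)
          assume "\<not> A \<inter> U \<subset> U"
          then have "U \<subseteq> A" by auto
          obtain x where "x \<in> X" "x \<notin> A" using A by auto
          then have "x \<in> W" using \<open>U \<subseteq> A\<close> unfolding X_def by auto
          then have "W - A \<noteq> {}" using \<open>x \<notin> A\<close> by auto
          then have "A \<inter> W = {}" using False by auto
          then show False using \<open>U \<subseteq> A\<close> W(1) e'U ne by auto
        qed
        have ns: "\<not> (I e' \<inter> (A \<inter> U) \<noteq> {} \<and> I e' \<inter> (U - A \<inter> U) \<noteq> {})"
          using False W(1) by auto
        have "m \<le> enat (card (cut_edges U (induced_edges E I U) I (A \<inter> U)))"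
          unfolding m_def by (rule key[OF H U'(2) U_def AU1 AU2 ns])
        also have "\<dots> \<le> enat (card (cut_edges X (induced_edges E I X) I A))"
          by (rule card_cut_le[OF finc]) (auto simp: cut_edges_def induced_edges_def X_def)
        finally show ?thesis by (simp add: min.coboundedI1)
      qed
    qed
    also have "\<dots> \<le> strength V E I e"
      by (rule str_ge) (use eU UV W(2) in \<open>auto simp: X_def\<close>)
    finally have mk: "min m (enat k) \<le> strength V E I e" .
    then show ?thesis using s1
      by (metis min.absorb_iff2 min_def not_le order_le_less_trans)
  qed
qed

theorem lemma2p3:
  fixes V :: "'v set" and E :: "'e set" and I :: "'e \<Rightarrow> 'v set"
    and e e' :: 'e and k :: nat
  assumes "hypergraph V E I" and "e \<in> E" and "e' \<in> E" and "e \<noteq> e'" and "k > 0"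
  shows "(strength V E I e \<ge> enat k \<and> strength V E I e' < enat k
            \<longrightarrow> strength V E I e = strength V (E - {e'}) I e)
       \<and> (strength V E I e < enat k \<and> strength V E I e' \<ge> enat k
            \<longrightarrow> e \<in> contr_E E I e' \<and>
                strength V E I e = strength (contr_V V I e') (contr_E E I e') (contr_I I e') e)"
  using part1[OF assms(1) assms(5)] part2a[of V E I e k e'] assms(2)
    part2b[OF assms(1), of e e'] part2c[OF assms(1) assms(5) assms(2) assms(3)]
  by (meson antisym)

end
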